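(* The $q$-Zeta volume of $P$ w.r.t. $h$ is $q^{\binom{H}{2}}$ times $\mathcal{H}_{\overline{P}, H-h}(1/q,1)$.
   Context: $P$ is a finite poset with height function $h : P \to \mathbb{N}$ (so $h(x) < h(y)$ for every cover relation $x<y$), and $H$ is the maximal value of $h$. We write $[n]_q = (q^n-1)/(q-1)$ and $[H]!_q$ for the $q$-factorial. The $q$-Zeta polynomial $\mathsf{Z}_{P,h}(x) \in \mathbb{Q}(q)[x]$ is the unique polynomial with $\mathsf{Z}_{P,h}([n]_q) = \sum_{e_1 \leq \dots \leq e_{n-1}} q^{\sum_j h(e_j)}$ (sum over multichains in $P$) for all $n \geq 2$; it has degree $H$. The $q$-Zeta volume of $P$ w.r.t. $h$ is the leading coefficient of $\mathsf{Z}_{P,h}$ times $[H]!_q$. For any poset $Q$ with height function $g$ of maximal value $H$, $\mathcal{H}_{Q,g}(q,t)$ denotes the polynomial in $q,q^{-1},t$ such that $\sum_{n \geq 0} \mathsf{Z}_{Q,g}([n+1]_q)\, t^n = \mathcal{H}_{Q,g}(q,t)/\prod_{\ell=0}^{H}(1-q^\ell t)$. Here $\overline{P}$ is the dual poset of $P$, endowed with the height function $H-h$. *)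

theory Defs
  imports "HOL-Computational_Algebra.Polynomial" "HOL-Computational_Algebra.Polynomial_FPS"
begin

definition poset_on :: "'a set \<Rightarrow> ('a \<Rightarrow> 'a \<Rightarrow> bool) \<Rightarrow> bool" where
  "poset_on P le \<longleftrightarrow>
     (\<forall>x\<in>P. le x x) \<and>
     (\<forall>x\<in>P. \<forall>y\<in>P. le x y \<and> le y x \<longrightarrow> x = y) \<and>
     (\<forall>x\<in>P. \<forall>y\<in>P. \<forall>z\<in>P. le x y \<and> le y z \<longrightarrow> le x z)"

definition covers :: "'a set \<Rightarrow> ('a \<Rightarrow> 'a \<Rightarrow> bool) \<Rightarrow> 'a \<Rightarrow> 'a \<Rightarrow> bool" where
  "covers P le x y \<longleftrightarrow> x \<in> P \<and> y \<in> P \<and> le x y \<and> x \<noteq> y \<and>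
     \<not> (\<exists>z\<in>P. le x z \<and> le z y \<and> z \<noteq> x \<and> z \<noteq> y)"

definition height_function :: "'a set \<Rightarrow> ('a \<Rightarrow> 'a \<Rightarrow> bool) \<Rightarrow> ('a \<Rightarrow> nat) \<Rightarrow> bool" where
  "height_function P le h \<longleftrightarrow> (\<forall>x y. covers P le x y \<longrightarrow> h x < h y)"

definition multichains :: "'a set \<Rightarrow> ('a \<Rightarrow> 'a \<Rightarrow> bool) \<Rightarrow> nat \<Rightarrow> 'a list set" where
  "multichains P le m = {es. length es = m \<and> set es \<subseteq> P \<and>
      (\<forall>i. Suc i < m \<longrightarrow> le (es ! i) (es ! Suc i))}"

definition qint :: "real \<Rightarrow> nat \<Rightarrow> real" where
  "qint q n = (q ^ n - 1) / (q - 1)"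

definition qfact :: "real \<Rightarrow> nat \<Rightarrow> real" where
  "qfact q n = (\<Prod>k\<in>{1..n}. qint q k)"

definition zeta_count :: "'a set \<Rightarrow> ('a \<Rightarrow> 'a \<Rightarrow> bool) \<Rightarrow> ('a \<Rightarrow> nat) \<Rightarrow> real \<Rightarrow> nat \<Rightarrow> real" where
  "zeta_count P le h q n = (\<Sum>es\<in>multichains P le (n - 1). q ^ sum_list (map h es))"

text \<open>q-Zeta polynomial (for a fixed real value of q): the unique polynomial Z with
  Z([n]_q) = zeta_count for all n \<ge> 2.\<close>
definition qzeta :: "'a set \<Rightarrow> ('a \<Rightarrow> 'a \<Rightarrow> bool) \<Rightarrow> ('a \<Rightarrow> nat) \<Rightarrow> real \<Rightarrow> real poly" where
  "qzeta P le h q = (THE Z. \<forall>n\<ge>2. poly Z (qint q n) = zeta_count P le h q n)"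

text \<open>The numerator polynomial (in t) \<H>_{Q,g}(q,t), with respect to the bound H:
  sum_{n\<ge>0} Z_{Q,g}([n+1]_q) t^n = \<H>(q,t) / prod_{l=0}^{H} (1 - q^l t).\<close>
definition hpoly :: "'a set \<Rightarrow> ('a \<Rightarrow> 'a \<Rightarrow> bool) \<Rightarrow> ('a \<Rightarrow> nat) \<Rightarrow> nat \<Rightarrow> real \<Rightarrow> real poly" where
  "hpoly Q le g H q = (THE p. fps_of_poly p =
      Abs_fps (\<lambda>n. poly (qzeta Q le g q) (qint q (n + 1))) *
      (\<Prod>l\<in>{0..H}. 1 - fps_const (q ^ l) * fps_X))"

end

theory Submission
  imports Defs
begin

lemma mc_finite: "finite P \<Longrightarrow> finite (multichains P le m)"
  unfolding multichains_def
  by (rule finite_subset[OF _ finite_lists_length_eq[of P m]]) auto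

lemma mc_Cons: "x # es \<in> multichains P le (Suc m) \<longleftrightarrow>
   x \<in> P \<and> es \<in> multichains P le m \<and> (es \<noteq> [] \<longrightarrow> le x (hd es))"
proof -
  have "(\<forall>i. Suc i < Suc m \<longrightarrow> le ((x#es) ! i) ((x#es) ! Suc i)) \<longleftrightarrow>
        (m > 0 \<longrightarrow> le x (es ! 0)) \<and> (\<forall>i. Suc i < m \<longrightarrow> le (es ! i) (es ! Suc i))"
    (is "?L \<longleftrightarrow> ?R")
  proof
    assume L: ?L
    show ?R
    proof (intro conjI allI impI)
      show "le x (es ! 0)" if "m > 0" using L[rule_format, of 0] that by simp
      fix i assume "Suc i < m" then show "le (es ! i) (es ! Suc i)" using L[rule_format, of "Suc i"] by simp
    qed
  next
    assume R: ?R
    show ?L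
    proof (intro allI impI)
      fix i assume "Suc i < Suc m"
      then show "le ((x#es) ! i) ((x#es) ! Suc i)" using R by (cases i) auto
    qed
  qed
  then show ?thesis unfolding multichains_def
    by (cases es) auto
qed

lemma mc_Suc_hd:
  assumes "x \<in> P"
  shows "{es \<in> multichains P le (Suc (Suc m)). hd es = x} =
         (\<lambda>es. x # es) ` {es \<in> multichains P le (Suc m). le x (hd es)}"
proof (intro set_eqI iffI)
  fix es assume a: "es \<in> {es \<in> multichains P le (Suc (Suc m)). hd es = x}"
  then obtain y ys where es: "es = y # ys" unfolding multichains_def by (cases es) auto
  with a show "es \<in> (\<lambda>es. x # es) ` {es \<in> multichains P le (Suc m). le x (hd es)}"
    using mc_Cons[of y ys P le "Suc m"] unfolding multichains_def by auto
next
  fix es assume "es \<in> (\<lambda>es. x # es) ` {es \<in> multichains P le (Suc m). le x (hd es)}"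
  then obtain ys where "es = x # ys" "ys \<in> multichains P le (Suc m)" "le x (hd ys)" by auto
  then show "es \<in> {es \<in> multichains P le (Suc (Suc m)). hd es = x}"
    using mc_Cons[of x ys P le "Suc m"] assms by auto
qed

lemma mc_one_hd: "x \<in> P \<Longrightarrow> {es \<in> multichains P le (Suc 0). hd es = x} = {[x]}"
  unfolding multichains_def by (auto simp: length_Suc_conv)

fun Gf :: "'a set \<Rightarrow> ('a \<Rightarrow> 'a \<Rightarrow> bool) \<Rightarrow> ('a \<Rightarrow> nat) \<Rightarrow> real \<Rightarrow> 'a \<Rightarrow> nat \<Rightarrow> real" where
  "Gf P le h q x 0 = q ^ h x"
| "Gf P le h q x (Suc m) = q ^ h x * (\<Sum>y\<in>{y\<in>P. le x y}. Gf P le h q y m)"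

lemma mc_hd_in: "es \<in> multichains P le (Suc m) \<Longrightarrow> hd es \<in> P"
  unfolding multichains_def by (cases es) auto

lemma Gf_sum:
  assumes "finite P" "x \<in> P"
  shows "(\<Sum>es\<in>{es \<in> multichains P le (Suc m). hd es = x}. q ^ sum_list (map h es)) = Gf P le h q x m"
  using assms(2)
proof (induction m arbitrary: x)
  case 0
  then show ?case by (simp add: mc_one_hd)
next
  case (Suc m)
  let ?w = "\<lambda>es. q ^ sum_list (map h es)"
  have fin: "finite (multichains P le (Suc m))" using mc_finite[OF assms(1)] .
  have "(\<Sum>es\<in>{es \<in> multichains P le (Suc (Suc m)). hd es = x}. ?w es)
      = (\<Sum>es\<in>{es \<in> multichains P le (Suc m). le x (hd es)}. ?w (x # es))"
    by (simp add: mc_Suc_hd[OF Suc.prems] sum.reindex inj_on_def)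
  also have "\<dots> = q ^ h x * (\<Sum>es\<in>{es \<in> multichains P le (Suc m). le x (hd es)}. ?w es)"
    by (simp add: power_add sum_distrib_left)
  also have "(\<Sum>es\<in>{es \<in> multichains P le (Suc m). le x (hd es)}. ?w es)
      = (\<Sum>y\<in>{y\<in>P. le x y}. \<Sum>es\<in>{es \<in> {es \<in> multichains P le (Suc m). le x (hd es)}. hd es = y}. ?w es)"
    by (rule sum.group[symmetric]) (use fin assms(1) mc_hd_in in auto)
  also have "\<dots> = (\<Sum>y\<in>{y\<in>P. le x y}. Gf P le h q y m)"
  proof (rule sum.cong[OF refl])
    fix y assume y: "y \<in> {y\<in>P. le x y}"
    have "{es \<in> {es \<in> multichains P le (Suc m). le x (hd es)}. hd es = y} = {es \<in> multichains P le (Suc m). hd es = y}"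
      using y by auto
    then show "(\<Sum>es\<in>{es \<in> {es \<in> multichains P le (Suc m). le x (hd es)}. hd es = y}. ?w es) = Gf P le h q y m"
      using Suc.IH[of y] y by simp
  qed
  finally show ?case by simp
qed

lemma zeta_Gf:
  assumes "finite P" "n \<ge> 2"
  shows "zeta_count P le h q n = (\<Sum>x\<in>P. Gf P le h q x (n - 2))"
proof -
  have n: "n - 1 = Suc (n - 2)" using assms(2) by simp
  have "zeta_count P le h q n = (\<Sum>es\<in>multichains P le (Suc (n-2)). q ^ sum_list (map h es))"
    unfolding zeta_count_def n ..
  also have "\<dots> = (\<Sum>x\<in>P. \<Sum>es\<in>{es \<in> multichains P le (Suc (n-2)). hd es = x}. q ^ sum_list (map h es))"
    by (rule sum.group[symmetric]) (use mc_finite[OF assms(1)] assms(1) mc_hd_in in auto)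
  also have "\<dots> = (\<Sum>x\<in>P. Gf P le h q x (n - 2))"
    using Gf_sum[OF assms(1)] by simp
  finally show ?thesis .
qed


lemma h_strict:
  assumes fin: "finite P" and po: "poset_on P le" and hf: "height_function P le h"
  shows "x \<in> P \<Longrightarrow> y \<in> P \<Longrightarrow> le x y \<Longrightarrow> x \<noteq> y \<Longrightarrow> h x < h y"
proof (induction "card {z\<in>P. le x z \<and> le z y}" arbitrary: x y rule: less_induct)
  case less
  show ?case
  proof (cases "covers P le x y")
    case True
    then show ?thesis using hf unfolding height_function_def by blast
  next
    case False
    then obtain z where z: "z \<in> P" "le x z" "le z y" "z \<noteq> x" "z \<noteq> y"
      using less.prems unfolding covers_def by blast
    have anti: "\<And>a b. a \<in> P \<Longrightarrow> b \<in> P \<Longrightarrow> le a b \<Longrightarrow> le b a \<Longrightarrow> a = b"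
      using po unfolding poset_on_def by blast
    have tr: "\<And>a b c. a \<in> P \<Longrightarrow> b \<in> P \<Longrightarrow> c \<in> P \<Longrightarrow> le a b \<Longrightarrow> le b c \<Longrightarrow> le a c"
      using po unfolding poset_on_def by blast
    have rf: "\<And>a. a \<in> P \<Longrightarrow> le a a" using po unfolding poset_on_def by blast
    have s1: "{w\<in>P. le x w \<and> le w z} \<subset> {w\<in>P. le x w \<and> le w y}"
    proof
      show "{w\<in>P. le x w \<and> le w z} \<subseteq> {w\<in>P. le x w \<and> le w y}" using tr z less.prems by blast
      have "y \<notin> {w\<in>P. le x w \<and> le w z}" using anti z less.prems by blast
      moreover have "y \<in> {w\<in>P. le x w \<and> le w y}" using less.prems rf by blast
      ultimately show "{w\<in>P. le x w \<and> le w z} \<noteq> {w\<in>P. le x w \<and> le w y}" by blast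
    qed
    have s2: "{w\<in>P. le z w \<and> le w y} \<subset> {w\<in>P. le x w \<and> le w y}"
    proof
      show "{w\<in>P. le z w \<and> le w y} \<subseteq> {w\<in>P. le x w \<and> le w y}" using tr z less.prems by blast
      have "x \<notin> {w\<in>P. le z w \<and> le w y}" using anti z less.prems by blast
      moreover have "x \<in> {w\<in>P. le x w \<and> le w y}" using less.prems rf by blast
      ultimately show "{w\<in>P. le z w \<and> le w y} \<noteq> {w\<in>P. le x w \<and> le w y}" by blast
    qed
    have f: "finite {w\<in>P. le x w \<and> le w y}" using fin by simp
    have "h x < h z" using less.hyps[OF psubset_card_mono[OF f s1]] less.prems z by blast
    moreover have "h z < h y" using less.hyps[OF psubset_card_mono[OF f s2]] less.prems z by blast
    ultimately show ?thesis by simp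
  qed
qed

lemma sum_Icc_if: "(\<Sum>j\<in>{a..H}. f j) = (\<Sum>j\<in>{b..H}. if a \<le> j then f j else (0::real))" if "b \<le> a" for a b H :: nat
proof -
  have "(\<Sum>j\<in>{b..H}. if a \<le> j then f j else 0) = sum f {j\<in>{b..H}. a \<le> j}"
    by (simp add: sum.inter_filter[symmetric])
  also have "{j\<in>{b..H}. a \<le> j} = {a..H}" using that by auto
  finally show ?thesis by simp
qed

lemma Gf_exp:
  assumes fin: "finite P" and po: "poset_on P le" and hf: "height_function P le h"
    and q: "q > 0" "q \<noteq> 1" and H: "\<forall>y\<in>P. h y \<le> H"
  shows "x \<in> P \<Longrightarrow> \<exists>c. \<forall>m. Gf P le h q x m = (\<Sum>j\<in>{h x..H}. c j * (q ^ j) ^ m)"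
proof (induction "H - h x" arbitrary: x rule: less_induct)
  case less
  define U where "U = {y\<in>P. le x y \<and> y \<noteq> x}"
  have hU: "\<And>y. y \<in> U \<Longrightarrow> h x < h y" using h_strict[OF fin po hf] less.prems unfolding U_def by blast
  have "\<forall>y\<in>U. \<exists>c. \<forall>m. Gf P le h q y m = (\<Sum>j\<in>{h y..H}. c j * (q ^ j) ^ m)"
  proof
    fix y assume y: "y \<in> U"
    have "H - h y < H - h x" using hU[OF y] H y unfolding U_def by fastforce
    then show "\<exists>c. \<forall>m. Gf P le h q y m = (\<Sum>j\<in>{h y..H}. c j * (q ^ j) ^ m)"
      using less.hyps y unfolding U_def by blast
  qed
  then obtain C where C: "\<And>y m. y \<in> U \<Longrightarrow> Gf P le h q y m = (\<Sum>j\<in>{h y..H}. C y j * (q ^ j) ^ m)"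
    by metis
  define lam where "lam = q ^ h x"
  define d where "d j = (\<Sum>y\<in>U. if h y \<le> j then C y j else 0)" for j
  have finU: "finite U" using fin unfolding U_def by simp
  have S: "(\<Sum>y\<in>U. Gf P le h q y m) = (\<Sum>j\<in>{Suc (h x)..H}. d j * (q ^ j) ^ m)" for m
  proof -
    have "(\<Sum>y\<in>U. Gf P le h q y m) = (\<Sum>y\<in>U. \<Sum>j\<in>{Suc (h x)..H}. (if h y \<le> j then C y j else 0) * (q ^ j) ^ m)"
    proof (rule sum.cong[OF refl])
      fix y assume y: "y \<in> U"
      have "Gf P le h q y m = (\<Sum>j\<in>{h y..H}. C y j * (q ^ j) ^ m)" using C[OF y] .
      also have "\<dots> = (\<Sum>j\<in>{Suc (h x)..H}. if h y \<le> j then C y j * (q ^ j) ^ m else 0)"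
        by (rule sum_Icc_if) (use hU[OF y] in simp)
      also have "\<dots> = (\<Sum>j\<in>{Suc (h x)..H}. (if h y \<le> j then C y j else 0) * (q ^ j) ^ m)"
        by (rule sum.cong) simp_all
      finally show "Gf P le h q y m = (\<Sum>j\<in>{Suc (h x)..H}. (if h y \<le> j then C y j else 0) * (q ^ j) ^ m)" .
    qed
    also have "\<dots> = (\<Sum>j\<in>{Suc (h x)..H}. d j * (q ^ j) ^ m)"
      unfolding d_def by (subst sum.swap) (simp add: sum_distrib_right)
    finally show ?thesis .
  qed
  define e where "e j = lam * d j / (q ^ j - lam)" for j
  define A where "A = lam - (\<Sum>j\<in>{Suc (h x)..H}. e j)"
  have ne: "q ^ j - lam \<noteq> 0" if "j \<in> {Suc (h x)..H}" for j
    using that power_inject_exp'[OF q(2) q(1), of j "h x"] unfolding lam_def by auto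
  have ed: "lam * (e j + d j) = e j * q ^ j" if "j \<in> {Suc (h x)..H}" for j
    using ne[OF that] unfolding e_def by (simp add: field_simps)
  have setx: "{y\<in>P. le x y} = insert x U"
    using less.prems po unfolding U_def poset_on_def by auto
  have G: "Gf P le h q x m = A * lam ^ m + (\<Sum>j\<in>{Suc (h x)..H}. e j * (q ^ j) ^ m)" for m
  proof (induction m)
    case 0
    then show ?case unfolding A_def lam_def by simp
  next
    case (Suc m)
    have "Gf P le h q x (Suc m) = lam * (Gf P le h q x m + (\<Sum>y\<in>U. Gf P le h q y m))"
    proof -
      have "x \<notin> U" unfolding U_def by simp
      then have "(\<Sum>y\<in>{y\<in>P. le x y}. Gf P le h q y m) = Gf P le h q x m + (\<Sum>y\<in>U. Gf P le h q y m)"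
        unfolding setx using finU by simp
      then show ?thesis unfolding lam_def by simp
    qed
    also have "\<dots> = lam * (A * lam ^ m + (\<Sum>j\<in>{Suc (h x)..H}. e j * (q ^ j) ^ m)
         + (\<Sum>j\<in>{Suc (h x)..H}. d j * (q ^ j) ^ m))" by (simp add: Suc S)
    also have "\<dots> = A * lam ^ Suc m + (\<Sum>j\<in>{Suc (h x)..H}. lam * (e j + d j) * (q ^ j) ^ m)"
      by (simp add: algebra_simps sum.distrib sum_distrib_left)
    also have "\<dots> = A * lam ^ Suc m + (\<Sum>j\<in>{Suc (h x)..H}. e j * (q ^ j) ^ Suc m)"
      by (simp add: ed mult.assoc)
    finally show ?case .
  qed
  define c where "c j = (if j = h x then A else e j)" for j
  have "Gf P le h q x m = (\<Sum>j\<in>{h x..H}. c j * (q ^ j) ^ m)" for m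
  proof -
    have hxH: "h x \<le> H" using H less.prems by blast
    have "{h x..H} = insert (h x) {Suc (h x)..H}" using hxH by auto
    then have "(\<Sum>j\<in>{h x..H}. c j * (q ^ j) ^ m) = c (h x) * (q ^ h x) ^ m + (\<Sum>j\<in>{Suc (h x)..H}. c j * (q ^ j) ^ m)"
      by simp
    also have "\<dots> = A * lam ^ m + (\<Sum>j\<in>{Suc (h x)..H}. e j * (q ^ j) ^ m)"
      unfolding c_def lam_def by simp
    finally show ?thesis using G by simp
  qed
  then show ?case by blast
qed


lemma poly_lin_qint: "r \<noteq> 1 \<Longrightarrow> poly [:1, r - 1:] (qint r n) = r ^ n"
  unfolding qint_def by (simp add: field_simps)

lemma poly_sum_lin:
  assumes "r \<noteq> 1"
  shows "poly (\<Sum>j\<in>J. smult (\<beta> j) ([:1, r - 1:] ^ e j)) (qint r n) = (\<Sum>j\<in>J. \<beta> j * (r ^ e j) ^ n)"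
proof -
  have L: "poly [:1, r - 1:] (qint r n) = r ^ n" using poly_lin_qint[OF assms] .
  have "poly (\<Sum>j\<in>J. smult (\<beta> j) ([:1, r - 1:] ^ e j)) (qint r n) = (\<Sum>j\<in>J. \<beta> j * (poly [:1, r - 1:] (qint r n)) ^ e j)"
    by (simp only: poly_sum poly_smult poly_power)
  also have "\<dots> = (\<Sum>j\<in>J. \<beta> j * (r ^ e j) ^ n)"
    unfolding L by (metis power_mult mult.commute)
  finally show ?thesis .
qed

lemma qint_inj: assumes "r > 0" "r \<noteq> 1" shows "inj (qint r)"
proof
  fix m n assume "qint r m = qint r n"
  then have "r ^ m = r ^ n" using assms unfolding qint_def by (simp add: field_simps)
  then show "m = n" using power_inject_exp'[OF assms(2) assms(1)] by simp
qed

lemma qzeta_eq: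
  assumes r: "r > 0" "r \<noteq> 1"
    and Z: "\<And>n. n \<ge> 2 \<Longrightarrow> zeta_count Q le g r n = (\<Sum>j\<in>J. \<beta> j * (r ^ e j) ^ n)"
  shows "qzeta Q le g r = (\<Sum>j\<in>J. smult (\<beta> j) ([:1, r - 1:] ^ e j))"
  unfolding qzeta_def
proof (rule the_equality)
  let ?Z = "(\<Sum>j\<in>J. smult (\<beta> j) ([:1, r - 1:] ^ e j))"
  show "\<forall>n\<ge>2. poly ?Z (qint r n) = zeta_count Q le g r n"
    by (auto simp: Z poly_sum_lin[OF r(2)])
  fix W assume W: "\<forall>n\<ge>2. poly W (qint r n) = zeta_count Q le g r n"
  show "W = ?Z"
  proof (rule ccontr)
    assume ne: "W \<noteq> ?Z"
    have pz: "poly (W - ?Z) (qint r n) = 0" if n: "n \<ge> 2" for n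
      using W n poly_sum_lin[OF r(2), of \<beta> e J n] Z[OF n] by simp
    have "qint r ` {2..} \<subseteq> {x. poly (W - ?Z) x = 0}"
      using pz by auto
    moreover have "infinite (qint r ` {2..})"
      using qint_inj[OF r] infinite_Ici[of "2::nat"] by (simp add: finite_image_iff inj_on_subset)
    ultimately have "infinite {x. poly (W - ?Z) x = 0}" using finite_subset by blast
    then show False using poly_roots_finite[of "W - ?Z"] ne by simp
  qed
qed

lemma coeff_lin_pow:
  assumes "c \<noteq> 0" "j \<le> H"
  shows "coeff ([:1, c:] ^ j) H = (if j = H then c ^ H else (0::real))"
proof -
  have deg: "degree ([:1, c:] ^ j) = j" using assms by (simp add: degree_power_eq)
  show ?thesis
  proof (cases "j = H")
    case True
    then show ?thesis using deg lead_coeff_power[of "[:1, c:]" j] assms by simp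
  next
    case False
    then show ?thesis using deg assms by (simp add: coeff_eq_0)
  qed
qed

lemma coeff_sum_lin:
  assumes "(c::real) \<noteq> 0"
  shows "coeff (\<Sum>j\<in>{0..H}. smult (\<beta> j) ([:1, c:] ^ j)) H = \<beta> H * c ^ H"
proof -
  have "coeff (\<Sum>j\<in>{0..H}. smult (\<beta> j) ([:1, c:] ^ j)) H = (\<Sum>j\<in>{0..H}. \<beta> j * (if j = H then c ^ H else 0))"
    by (simp add: coeff_sum coeff_lin_pow[OF assms])
  also have "\<dots> = \<beta> H * c ^ H" by (simp add: if_distrib cong: if_cong)
  finally show ?thesis .
qed

lemma fps_geo: "Abs_fps (\<lambda>n. (a::real) ^ n) * (1 - fps_const a * fps_X) = 1"
proof (rule fps_ext)
  fix n
  have "Abs_fps (\<lambda>n. a ^ n) * (1 - fps_const a * fps_X) = Abs_fps (\<lambda>n. a ^ n) - fps_const a * (Abs_fps (\<lambda>n. a ^ n) * fps_X)"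
    by (simp add: algebra_simps)
  then show "fps_nth (Abs_fps (\<lambda>n. a ^ n) * (1 - fps_const a * fps_X)) n = fps_nth 1 n"
    by (cases n) (simp_all add: fps_X_mult_right_nth)
qed

lemma fps_of_poly_sum': "fps_of_poly (sum f A) = (\<Sum>x\<in>A. fps_of_poly (f x))"
  by (induction A rule: infinite_finite_induct) (simp_all add: fps_of_poly_add)

lemma fps_lin_neg: "fps_of_poly [:1, - a:] = 1 - fps_const (a::real) * fps_X"
proof -
  have "fps_of_poly [:1, - a:] = 1 + fps_const (- a) * fps_X" by (rule fps_of_poly_linear')
  also have "fps_const (- a) = - fps_const a" by (rule fps_const_neg[symmetric])
  finally show ?thesis by (simp only: mult_minus_left diff_conv_add_uminus)
qed

lemma fps_part:
  assumes fin: "finite J" and e: "\<And>j. j \<in> J \<Longrightarrow> e j \<in> {0..H}"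
  shows "Abs_fps (\<lambda>n. \<Sum>j\<in>J. \<gamma> j * ((r::real) ^ e j) ^ n) * (\<Prod>l\<in>{0..H}. 1 - fps_const (r ^ l) * fps_X)
     = fps_of_poly (\<Sum>j\<in>J. smult (\<gamma> j) (\<Prod>l\<in>{0..H} - {e j}. [:1, - (r ^ l):]))"
proof -
  have A: "Abs_fps (\<lambda>n. \<Sum>j\<in>J. \<gamma> j * (r ^ e j) ^ n) = (\<Sum>j\<in>J. fps_const (\<gamma> j) * Abs_fps (\<lambda>n. (r ^ e j) ^ n))"
    by (rule fps_ext) (simp add: fps_sum_nth)
  have B: "fps_const (\<gamma> j) * Abs_fps (\<lambda>n. (r ^ e j) ^ n) * (\<Prod>l\<in>{0..H}. 1 - fps_const (r ^ l) * fps_X)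
       = fps_of_poly (smult (\<gamma> j) (\<Prod>l\<in>{0..H} - {e j}. [:1, - (r ^ l):]))" if j: "j \<in> J" for j
  proof -
    have "(\<Prod>l\<in>{0..H}. 1 - fps_const (r ^ l) * fps_X) = (1 - fps_const (r ^ e j) * fps_X) * (\<Prod>l\<in>{0..H} - {e j}. 1 - fps_const (r ^ l) * fps_X)"
      using e[OF j] by (simp add: prod.remove)
    then have "fps_const (\<gamma> j) * Abs_fps (\<lambda>n. (r ^ e j) ^ n) * (\<Prod>l\<in>{0..H}. 1 - fps_const (r ^ l) * fps_X)
        = fps_const (\<gamma> j) * (Abs_fps (\<lambda>n. (r ^ e j) ^ n) * (1 - fps_const (r ^ e j) * fps_X)) * (\<Prod>l\<in>{0..H} - {e j}. 1 - fps_const (r ^ l) * fps_X)"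
      by (simp add: mult.assoc)
    also have "\<dots> = fps_const (\<gamma> j) * (\<Prod>l\<in>{0..H} - {e j}. 1 - fps_const (r ^ l) * fps_X)"
      by (simp add: fps_geo)
    also have "\<dots> = fps_of_poly (smult (\<gamma> j) (\<Prod>l\<in>{0..H} - {e j}. [:1, - (r ^ l):]))"
      by (simp add: fps_of_poly_smult fps_of_poly_prod fps_lin_neg)
    finally show ?thesis .
  qed
  show ?thesis unfolding A sum_distrib_right fps_of_poly_sum'
    by (rule sum.cong[OF refl]) (rule B)
qed


lemma mc_rev: "rev es \<in> multichains P le m \<longleftrightarrow> es \<in> multichains P (\<lambda>x y. le y x) m"
proof -
  have key: "(\<forall>i. Suc i < m \<longrightarrow> le (rev es ! i) (rev es ! Suc i)) \<longleftrightarrow>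
             (\<forall>k. Suc k < m \<longrightarrow> le (es ! Suc k) (es ! k))" if len: "length es = m"
  proof
    assume A: "\<forall>i. Suc i < m \<longrightarrow> le (rev es ! i) (rev es ! Suc i)"
    show "\<forall>k. Suc k < m \<longrightarrow> le (es ! Suc k) (es ! k)"
    proof (intro allI impI)
      fix k assume k: "Suc k < m"
      have "le (rev es ! (m - 2 - k)) (rev es ! Suc (m - 2 - k))" using A k by auto
      moreover have "rev es ! (m - 2 - k) = es ! Suc k" using k len by (simp add: rev_nth)
      moreover have "rev es ! Suc (m - 2 - k) = es ! k" using k len by (simp add: rev_nth Suc_diff_Suc)
      ultimately show "le (es ! Suc k) (es ! k)" by simp
    qed
  next
    assume A: "\<forall>k. Suc k < m \<longrightarrow> le (es ! Suc k) (es ! k)"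
    show "\<forall>i. Suc i < m \<longrightarrow> le (rev es ! i) (rev es ! Suc i)"
    proof (intro allI impI)
      fix i assume i: "Suc i < m"
      have l1: "le (es ! Suc (m - 2 - i)) (es ! (m - 2 - i))" using A i by auto
      have mi: "m - Suc i = Suc (m - 2 - i)" using i by arith
      have r1: "rev es ! i = es ! (m - Suc i)" using i len by (simp add: rev_nth)
      have r2: "rev es ! Suc i = es ! (m - 2 - i)" using i len by (simp add: rev_nth)
      have "rev es ! i = es ! Suc (m - 2 - i)" using r1 mi by simp
      with r2 l1 show "le (rev es ! i) (rev es ! Suc i)" by simp
    qed
  qed
  show ?thesis unfolding multichains_def using key by auto
qed

lemma dual_weight:
  assumes q: "(q::real) > 0" and "set es \<subseteq> P" and H: "\<forall>y\<in>P. h y \<le> H"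
  shows "(1 / q) ^ sum_list (map (\<lambda>x. H - h x) es) = q ^ sum_list (map h es) / q ^ (length es * H)"
  using assms(2)
proof (induction es)
  case Nil
  then show ?case by simp
next
  case (Cons x es)
  have hx: "h x \<le> H" using Cons.prems H by auto
  have "(1 / q) ^ (H - h x) = q ^ h x / q ^ H"
    using q hx by (simp add: power_diff power_one_over)
  then show ?case using Cons q by (simp add: power_add field_simps)
qed

lemma dual_count:
  assumes q: "q > 0" and fin: "finite P" and H: "\<forall>y\<in>P. h y \<le> H"
  shows "zeta_count P (\<lambda>x y. le y x) (\<lambda>x. H - h x) (1 / q) n = zeta_count P le h q n / q ^ ((n - 1) * H)"
proof -
  have eq: "multichains P (\<lambda>x y. le y x) (n - 1) = rev ` multichains P le (n - 1)"
  proof (intro set_eqI iffI)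
    fix es assume "es \<in> multichains P (\<lambda>x y. le y x) (n - 1)"
    then have "rev es \<in> multichains P le (n - 1)" using mc_rev by blast
    then show "es \<in> rev ` multichains P le (n - 1)" by (metis image_eqI rev_rev_ident)
  next
    fix es assume "es \<in> rev ` multichains P le (n - 1)"
    then show "es \<in> multichains P (\<lambda>x y. le y x) (n - 1)" using mc_rev by fastforce
  qed
  have "zeta_count P (\<lambda>x y. le y x) (\<lambda>x. H - h x) (1 / q) n
      = (\<Sum>es\<in>multichains P le (n - 1). (1 / q) ^ sum_list (map (\<lambda>x. H - h x) (rev es)))"
    unfolding zeta_count_def eq by (simp add: sum.reindex)
  also have "\<dots> = (\<Sum>es\<in>multichains P le (n - 1). q ^ sum_list (map h es) / q ^ ((n - 1) * H))"
  proof (rule sum.cong[OF refl])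
    fix es assume es: "es \<in> multichains P le (n - 1)"
    then show "(1 / q) ^ sum_list (map (\<lambda>x. H - h x) (rev es)) = q ^ sum_list (map h es) / q ^ ((n - 1) * H)"
      using dual_weight[OF q _ H, of es] unfolding multichains_def by (simp add: rev_map[symmetric])
  qed
  also have "\<dots> = zeta_count P le h q n / q ^ ((n - 1) * H)"
    unfolding zeta_count_def by (simp add: sum_divide_distrib)
  finally show ?thesis .
qed

lemma qfact_mult: "(q::real) \<noteq> 1 \<Longrightarrow> (q - 1) ^ H * qfact q H = (\<Prod>k\<in>{1..H}. q ^ k - 1)"
  by (induction H) (simp_all add: qfact_def qint_def atLeastAtMostSuc_conv field_simps)

lemma prod_recip: "(q::real) > 0 \<Longrightarrow> q ^ (H choose 2) * q ^ H * (\<Prod>l\<in>{1..H}. 1 - (1/q) ^ l) = (\<Prod>l\<in>{1..H}. q ^ l - 1)"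
proof (induction H)
  case 0
  then show ?case by (simp add: numeral_2_eq_2)
next
  case (Suc H)
  have c: "Suc H choose 2 = (H choose 2) + H" by (simp add: numeral_2_eq_2)
  have "q ^ (Suc H choose 2) * q ^ Suc H * (\<Prod>l\<in>{1..Suc H}. 1 - (1/q) ^ l)
      = (q ^ (H choose 2) * q ^ H * (\<Prod>l\<in>{1..H}. 1 - (1/q) ^ l)) * (q ^ Suc H * (1 - (1/q) ^ Suc H))"
    unfolding c by (simp add: atLeastAtMostSuc_conv power_add mult_ac)
  also have "q ^ Suc H * (1 - (1/q) ^ Suc H) = q ^ Suc H - 1"
    using Suc.prems by (simp add: field_simps power_one_over)
  finally have st: "q ^ (Suc H choose 2) * q ^ Suc H * (\<Prod>l\<in>{1..Suc H}. 1 - (1/q) ^ l)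
      = (q ^ (H choose 2) * q ^ H * (\<Prod>l\<in>{1..H}. 1 - (1/q) ^ l)) * (q ^ Suc H - 1)" .
  have "(\<Prod>l\<in>{1..Suc H}. q ^ l - 1) = (\<Prod>l\<in>{1..H}. q ^ l - 1) * (q ^ Suc H - 1)"
    by (simp add: atLeastAtMostSuc_conv mult.commute)
  moreover have ih: "q ^ (H choose 2) * q ^ H * (\<Prod>l\<in>{1..H}. 1 - (1/q) ^ l) = (\<Prod>l\<in>{1..H}. q ^ l - 1)"
    using Suc.IH Suc.prems by blast
  ultimately show ?case using st by (simp only:)
qed


theorem mainTheorem5:
  fixes P :: "'a set" and le :: "'a \<Rightarrow> 'a \<Rightarrow> bool" and h :: "'a \<Rightarrow> nat" and q :: real
  assumes "finite P" and "P \<noteq> {}" and "poset_on P le" and "height_function P le h"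
    and "q > 0" and "q \<noteq> 1"
  shows "coeff (qzeta P le h q) (Max (h ` P)) * qfact q (Max (h ` P))
         = q ^ (Max (h ` P) choose 2) *
           poly (hpoly P (\<lambda>x y. le y x) (\<lambda>x. Max (h ` P) - h x) (Max (h ` P)) (1 / q)) 1"
proof -
  note fin = assms(1) and po = assms(3) and hf = assms(4) and q = assms(5,6)
  define H where "H = Max (h ` P)"
  have Hb: "\<forall>y\<in>P. h y \<le> H" unfolding H_def using fin by simp
  have "\<forall>x\<in>P. \<exists>c. \<forall>m. Gf P le h q x m = (\<Sum>j\<in>{h x..H}. c j * (q ^ j) ^ m)"
    using Gf_exp[OF fin po hf q Hb] by blast
  then obtain C where C: "\<And>x m. x \<in> P \<Longrightarrow> Gf P le h q x m = (\<Sum>j\<in>{h x..H}. C x j * (q ^ j) ^ m)"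
    by metis
  define a where "a j = (\<Sum>x\<in>P. if h x \<le> j then C x j else 0) / (q ^ j) ^ 2" for j
  have qj: "q ^ j \<noteq> 0" for j using q by simp
  have ZP: "zeta_count P le h q n = (\<Sum>j\<in>{0..H}. a j * (q ^ j) ^ n)" if n: "n \<ge> 2" for n
  proof -
    have "zeta_count P le h q n = (\<Sum>x\<in>P. Gf P le h q x (n - 2))" using zeta_Gf[OF fin n] .
    also have "\<dots> = (\<Sum>x\<in>P. \<Sum>j\<in>{0..H}. (if h x \<le> j then C x j else 0) * (q ^ j) ^ (n - 2))"
    proof (rule sum.cong[OF refl])
      fix x assume x: "x \<in> P"
      have "Gf P le h q x (n - 2) = (\<Sum>j\<in>{h x..H}. C x j * (q ^ j) ^ (n - 2))" using C[OF x] .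
      also have "\<dots> = (\<Sum>j\<in>{0..H}. if h x \<le> j then C x j * (q ^ j) ^ (n - 2) else 0)"
        by (rule sum_Icc_if) simp
      also have "\<dots> = (\<Sum>j\<in>{0..H}. (if h x \<le> j then C x j else 0) * (q ^ j) ^ (n - 2))"
        by (rule sum.cong) simp_all
      finally show "Gf P le h q x (n - 2) = (\<Sum>j\<in>{0..H}. (if h x \<le> j then C x j else 0) * (q ^ j) ^ (n - 2))" .
    qed
    also have "\<dots> = (\<Sum>j\<in>{0..H}. (\<Sum>x\<in>P. if h x \<le> j then C x j else 0) * (q ^ j) ^ (n - 2))"
      by (subst sum.swap) (simp add: sum_distrib_right)
    also have "\<dots> = (\<Sum>j\<in>{0..H}. a j * (q ^ j) ^ n)"
    proof (rule sum.cong[OF refl])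
      fix j
      have "(q ^ j) ^ (n - 2) = (q ^ j) ^ n / (q ^ j) ^ 2" using n qj[of j] by (simp add: power_diff)
      then show "(\<Sum>x\<in>P. if h x \<le> j then C x j else 0) * (q ^ j) ^ (n - 2) = a j * (q ^ j) ^ n"
        unfolding a_def by simp
    qed
    finally show ?thesis .
  qed
  have QZP: "qzeta P le h q = (\<Sum>j\<in>{0..H}. smult (a j) ([:1, q - 1:] ^ j))"
    using qzeta_eq[OF q, where Q=P and le=le and g=h and J="{0..H}" and \<beta>=a and e="\<lambda>j. j"] ZP by simp
  have LHS: "coeff (qzeta P le h q) H * qfact q H = a H * (\<Prod>k\<in>{1..H}. q ^ k - 1)"
    unfolding QZP using coeff_sum_lin[of "q - 1" a H] q qfact_mult[OF q(2), of H] by simp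
  define r where "r = 1 / q"
  have r: "r > 0" "r \<noteq> 1" unfolding r_def using q by auto
  have trm: "(q ^ j) ^ n / q ^ ((n - 1) * H) = q ^ H * (r ^ (H - j)) ^ n" if "n \<ge> 1" "j \<le> H" for n j
  proof -
    have n1: "H * n = j * n + (H - j) * n" using that by (simp add: add_mult_distrib[symmetric])
    have n2: "H * n = H + (n - 1) * H" using that by (cases n) auto
    have e1: "q ^ (H * n) = (q ^ j) ^ n * (q ^ (H - j)) ^ n"
      unfolding n1 power_add power_mult ..
    have e2: "q ^ (H * n) = q ^ H * q ^ ((n - 1) * H)"
      by (subst n2) (simp only: power_add)
    have "(r ^ (H - j)) ^ n = 1 / (q ^ (H - j)) ^ n" unfolding r_def by (simp add: power_one_over)
    then have XR: "(q ^ (H - j)) ^ n * (r ^ (H - j)) ^ n = 1" using q by simp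
    have "q ^ H * (r ^ (H - j)) ^ n * q ^ ((n - 1) * H) = (r ^ (H - j)) ^ n * (q ^ H * q ^ ((n - 1) * H))"
      by (simp only: mult_ac)
    also have "\<dots> = (r ^ (H - j)) ^ n * ((q ^ j) ^ n * (q ^ (H - j)) ^ n)" using e1 e2 by simp
    also have "\<dots> = (q ^ j) ^ n * ((q ^ (H - j)) ^ n * (r ^ (H - j)) ^ n)" by (simp only: mult_ac)
    also have "\<dots> = (q ^ j) ^ n" using XR by simp
    finally have "q ^ H * (r ^ (H - j)) ^ n * q ^ ((n - 1) * H) = (q ^ j) ^ n" .
    then show ?thesis using q by (simp add: divide_eq_eq)
  qed
  have ZQ: "zeta_count P (\<lambda>x y. le y x) (\<lambda>x. H - h x) r n = (\<Sum>j\<in>{0..H}. (a j * q ^ H) * (r ^ (H - j)) ^ n)"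
    if n: "n \<ge> 2" for n
  proof -
    have "zeta_count P (\<lambda>x y. le y x) (\<lambda>x. H - h x) r n = zeta_count P le h q n / q ^ ((n - 1) * H)"
      unfolding r_def using dual_count[OF q(1) fin Hb] .
    also have "\<dots> = (\<Sum>j\<in>{0..H}. a j * ((q ^ j) ^ n / q ^ ((n - 1) * H)))"
      using ZP[OF n] by (simp add: sum_divide_distrib)
    also have "\<dots> = (\<Sum>j\<in>{0..H}. (a j * q ^ H) * (r ^ (H - j)) ^ n)"
      by (rule sum.cong[OF refl]) (use n trm in auto)
    finally show ?thesis .
  qed
  have QZQ: "qzeta P (\<lambda>x y. le y x) (\<lambda>x. H - h x) r = (\<Sum>j\<in>{0..H}. smult (a j * q ^ H) ([:1, r - 1:] ^ (H - j)))"
    using qzeta_eq[OF r, where Q=P and le="\<lambda>x y. le y x" and g="\<lambda>x. H - h x" and J="{0..H}" and \<beta>="\<lambda>j. a j * q ^ H" and e="\<lambda>j. H - j"] ZQ by simp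
  define \<gamma> where "\<gamma> j = a j * q ^ H * r ^ (H - j)" for j
  define p where "p = (\<Sum>j\<in>{0..H}. smult (\<gamma> j) (\<Prod>l\<in>{0..H} - {H - j}. [:1, - (r ^ l):]))"
  have seq: "poly (qzeta P (\<lambda>x y. le y x) (\<lambda>x. H - h x) r) (qint r (n + 1)) = (\<Sum>j\<in>{0..H}. \<gamma> j * (r ^ (H - j)) ^ n)" for n
    unfolding QZQ poly_sum_lin[OF r(2)] \<gamma>_def by (simp add: mult_ac)
  have HP: "hpoly P (\<lambda>x y. le y x) (\<lambda>x. H - h x) H r = p"
    unfolding hpoly_def
  proof (rule the_equality)
    show "fps_of_poly p = Abs_fps (\<lambda>n. poly (qzeta P (\<lambda>x y. le y x) (\<lambda>x. H - h x) r) (qint r (n + 1))) *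
        (\<Prod>l\<in>{0..H}. 1 - fps_const (r ^ l) * fps_X)"
      unfolding seq p_def by (rule fps_part[symmetric]) auto
    then show "\<And>p'. fps_of_poly p' = Abs_fps (\<lambda>n. poly (qzeta P (\<lambda>x y. le y x) (\<lambda>x. H - h x) r) (qint r (n + 1))) *
        (\<Prod>l\<in>{0..H}. 1 - fps_const (r ^ l) * fps_X) \<Longrightarrow> p' = p"
      by (metis fps_of_poly_eq_iff)
  qed
  have P1: "poly p 1 = a H * q ^ H * (\<Prod>l\<in>{1..H}. 1 - r ^ l)"
  proof -
    have "poly p 1 = (\<Sum>j\<in>{0..H}. \<gamma> j * (\<Prod>l\<in>{0..H} - {H - j}. 1 - r ^ l))"
      unfolding p_def by (simp add: poly_sum poly_prod)
    also have "\<dots> = (\<Sum>j\<in>{0..H}. if j = H then a H * q ^ H * (\<Prod>l\<in>{1..H}. 1 - r ^ l) else 0)"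
    proof (rule sum.cong[OF refl])
      fix j assume j: "j \<in> {0..H}"
      show "\<gamma> j * (\<Prod>l\<in>{0..H} - {H - j}. 1 - r ^ l) = (if j = H then a H * q ^ H * (\<Prod>l\<in>{1..H}. 1 - r ^ l) else 0)"
      proof (cases "j = H")
        case True
        have "{0..H} - {0} = {1..H}" by auto
        then show ?thesis using True unfolding \<gamma>_def by simp
      next
        case False
        have "0 \<in> {0..H} - {H - j}" using False j by auto
        then have "\<exists>a\<in>{0..H} - {H - j}. 1 - r ^ a = 0" by (intro bexI[of _ 0]) auto
        then have "(\<Prod>l\<in>{0..H} - {H - j}. 1 - r ^ l) = 0"
          by (intro prod_zero) auto
        then show ?thesis using False by simp
      qed
    qed
    also have "\<dots> = a H * q ^ H * (\<Prod>l\<in>{1..H}. 1 - r ^ l)" by simp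
    finally show ?thesis .
  qed
  have "q ^ (H choose 2) * poly (hpoly P (\<lambda>x y. le y x) (\<lambda>x. H - h x) H r) 1
      = a H * (q ^ (H choose 2) * q ^ H * (\<Prod>l\<in>{1..H}. 1 - (1/q) ^ l))"
    unfolding HP P1 by (simp add: r_def mult_ac)
  also have "\<dots> = a H * (\<Prod>k\<in>{1..H}. q ^ k - 1)" using prod_recip[OF q(1)] by simp
  finally have calc: "q ^ (H choose 2) * poly (hpoly P (\<lambda>x y. le y x) (\<lambda>x. H - h x) H r) 1 = a H * (\<Prod>k\<in>{1..H}. q ^ k - 1)" .
  show ?thesis using LHS calc unfolding H_def r_def by (simp only:)
qed

end
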